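(* The category of finite dimensional rational $\mathbb G_a$-modules over $k$ is wild.
   Context: $k$ is an algebraically closed field of characteristic $p>0$, $\mathbb G_a$ is the additive group over $k$, and a rational $\mathbb G_a$-module is a comodule for $k[\mathbb G_a]=k[T]$. *)

theory Defs
  imports "Jordan_Normal_Form.Matrix" "HOL-Computational_Algebra.Polynomial"
begin

definition family_dim :: "nat \<Rightarrow> ('i \<Rightarrow> 'a::field mat) \<Rightarrow> bool" where
  "family_dim m M \<longleftrightarrow> (\<forall>i. M i \<in> carrier_mat m m)"

definition family_hom :: "nat \<Rightarrow> ('i \<Rightarrow> 'a::field mat) \<Rightarrow> nat \<Rightarrow> ('i \<Rightarrow> 'a mat) \<Rightarrow> 'a mat \<Rightarrow> bool" where
  "family_hom m M m' M' f \<longleftrightarrow> f \<in> carrier_mat m' m \<and> (\<forall>i. f * M i = M' i * f)"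

definition family_iso :: "nat \<Rightarrow> ('i \<Rightarrow> 'a::field mat) \<Rightarrow> nat \<Rightarrow> ('i \<Rightarrow> 'a mat) \<Rightarrow> bool" where
  "family_iso m M m' M' \<longleftrightarrow> (\<exists>f g. family_hom m M m' M' f \<and> family_hom m' M' m M g
      \<and> g * f = 1\<^sub>m m \<and> f * g = 1\<^sub>m m')"

definition family_indec :: "nat \<Rightarrow> ('i \<Rightarrow> 'a::field mat) \<Rightarrow> bool" where
  "family_indec m M \<longleftrightarrow> m > 0 \<and> (\<forall>e. family_hom m M m M e \<and> e * e = e
      \<longrightarrow> e = 0\<^sub>m m m \<or> e = 1\<^sub>m m)"

(* Rational G_a-module structure on k^m, i.e. a k[T]-comodule structure
   Delta(v) = sum_i C_i v (x) T^i  (finitely many nonzero C_i).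
   Coassociativity with Delta(T^n) = sum_j binom(n,j) T^j (x) T^(n-j) is
   C_j * C_l = binom(j+l, j) C_(j+l); counitality (eps(T^i) = delta_(i,0)) is C_0 = 1. *)
definition rational_Ga_module :: "nat \<Rightarrow> (nat \<Rightarrow> 'a::field mat) \<Rightarrow> bool" where
  "rational_Ga_module m C \<longleftrightarrow> family_dim m C
     \<and> (\<exists>d. \<forall>i>d. C i = 0\<^sub>m m m)
     \<and> C 0 = 1\<^sub>m m
     \<and> (\<forall>j l. C j * C l = of_nat ((j + l) choose j) \<cdot>\<^sub>m C (j + l))"

(* Noncommutative polynomials in k<x,y>: finitely supported coefficient functions on
   words over {x,y} (False = x, True = y). *)
definition ncpoly :: "(bool list \<Rightarrow> 'a::field) \<Rightarrow> bool" where
  "ncpoly c \<longleftrightarrow> finite {w. c w \<noteq> 0}"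

fun word_eval :: "nat \<Rightarrow> 'a::field mat \<Rightarrow> 'a mat \<Rightarrow> bool list \<Rightarrow> 'a mat" where
  "word_eval n A B [] = 1\<^sub>m n"
| "word_eval n A B (b # w) = (if b then B else A) * word_eval n A B w"

definition ncpoly_eval :: "nat \<Rightarrow> (bool list \<Rightarrow> 'a::field) \<Rightarrow> 'a mat \<Rightarrow> 'a mat \<Rightarrow> 'a mat" where
  "ncpoly_eval n c A B = mat n n (\<lambda>(i, j). \<Sum>w\<in>{w. c w \<noteq> 0}. c w * word_eval n A B w $$ (i, j))"

(* The pair (A,B) as a k<x,y>-module of dimension n *)
definition pair_family :: "'a mat \<Rightarrow> 'a mat \<Rightarrow> bool \<Rightarrow> 'a mat" where
  "pair_family A B = (\<lambda>b. if b then B else A)"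

(* The functor  M (x)_{k<x,y>} -  given by a k[T]-comodule / k<x,y>-bimodule M that is
   free of rank r over k<x,y>: the coaction on the basis of M is encoded by the
   r x r matrices P i of noncommutative polynomials (coefficient of T^i). *)
definition bimod_functor ::
  "nat \<Rightarrow> (nat \<Rightarrow> nat \<Rightarrow> nat \<Rightarrow> bool list \<Rightarrow> 'a::field) \<Rightarrow> nat \<Rightarrow> 'a mat \<Rightarrow> 'a mat \<Rightarrow> nat \<Rightarrow> 'a mat" where
  "bimod_functor r P n A B i = mat (r * n) (r * n)
     (\<lambda>(p, q). ncpoly_eval n (P i (p div n) (q div n)) A B $$ (p mod n, q mod n))"

(* Wildness (Drozd): there is a representation embedding of the finite dimensional
   k<x,y>-modules into finite dimensional rational G_a-modules, given by tensoring
   with a bimodule free of finite rank over k<x,y>, which preserves indecomposability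
   and reflects isomorphism classes. *)
definition Ga_modules_wild :: "'a::field itself \<Rightarrow> bool" where
  "Ga_modules_wild _ \<longleftrightarrow> (\<exists>(r::nat) (P :: nat \<Rightarrow> nat \<Rightarrow> nat \<Rightarrow> bool list \<Rightarrow> 'a).
      r > 0
    \<and> (\<forall>i a b. ncpoly (P i a b))
    \<and> (\<exists>d. \<forall>i>d. \<forall>a b. P i a b = (\<lambda>_. 0))
    \<and> (\<forall>n A B. A \<in> carrier_mat n n \<and> B \<in> carrier_mat n n \<longrightarrow>
          rational_Ga_module (r * n) (bimod_functor r P n A B))
    \<and> (\<forall>n A B. A \<in> carrier_mat n n \<and> B \<in> carrier_mat n n \<longrightarrow>
          family_indec n (pair_family A B) \<longrightarrow>
          family_indec (r * n) (bimod_functor r P n A B))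
    \<and> (\<forall>n A B n' A' B'. A \<in> carrier_mat n n \<and> B \<in> carrier_mat n n \<and>
          A' \<in> carrier_mat n' n' \<and> B' \<in> carrier_mat n' n' \<longrightarrow>
          family_iso (r * n) (bimod_functor r P n A B) (r * n') (bimod_functor r P n' A' B') \<longrightarrow>
          family_iso n (pair_family A B) n' (pair_family A' B')))"

definition alg_closed :: "'a::field itself \<Rightarrow> bool" where
  "alg_closed _ \<longleftrightarrow> (\<forall>p :: 'a poly. degree p \<ge> 1 \<longrightarrow> (\<exists>x. poly p x = 0))"

end

theory Submission
  imports Defs "HOL-Computational_Algebra.Primes"
begin

lemma prime_pow_dvd_choose:
  fixes p k j :: nat
  assumes pr: "prime p" and j: "0 < j" "j < p ^ k"
  shows "p dvd (p ^ k choose j)"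
proof (rule ccontr)
  assume nd: "\<not> p dvd (p ^ k choose j)"
  have k: "k > 0" using j by (cases k) auto
  have eq: "j * (p ^ k choose j) = p ^ k * ((p ^ k - 1) choose (j - 1))"
    using times_binomial_minus1_eq[OF j(1)] by simp
  have "coprime p (p ^ k choose j)" using nd pr by (simp add: prime_imp_coprime)
  hence "coprime (p ^ k) (p ^ k choose j)" by simp
  moreover have "p ^ k dvd j * (p ^ k choose j)" unfolding eq by simp
  ultimately have "p ^ k dvd j" by (metis coprime_dvd_mult_left_iff)
  hence "p ^ k \<le> j" using j(1) by (simp add: dvd_imp_le)
  thus False using j(2) by simp
qed

definition cst :: "'a::field \<Rightarrow> bool list \<Rightarrow> 'a" where
  "cst c w = (if w = [] then c else 0)"
definition var :: "bool \<Rightarrow> bool list \<Rightarrow> 'a::field" where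
  "var b w = (if w = [b] then 1 else 0)"

lemma eval_zero: "ncpoly_eval n (\<lambda>_. 0::'a::field) A B = 0\<^sub>m n n"
  unfolding ncpoly_eval_def by (rule eq_matI) auto

lemma eval_one: "ncpoly_eval n (cst (1::'a::field)) A B = 1\<^sub>m n"
proof -
  have "{w. cst (1::'a) w \<noteq> 0} = {[]}" by (auto simp: cst_def)
  thus ?thesis unfolding ncpoly_eval_def by (intro eq_matI) (auto simp: cst_def)
qed

lemma eval_var:
  assumes "A \<in> carrier_mat n n" "B \<in> carrier_mat n n"
  shows "ncpoly_eval n (var b :: bool list \<Rightarrow> 'a::field) A B = (if b then B else A)"
proof -
  have S: "{w. (var b :: bool list \<Rightarrow> 'a) w \<noteq> 0} = {[b]}" by (auto simp: var_def)
  have W: "word_eval n A B [b] = (if b then B else A)" using assms by (cases b) simp_all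
  have V: "(var b :: bool list \<Rightarrow> 'a) [b] = 1" by (simp add: var_def)
  have C: "(if b then B else A) \<in> carrier_mat n n" using assms by simp
  have M: "mat n n (\<lambda>(i, j). \<Sum>w\<in>{[b]}. (var b :: bool list \<Rightarrow> 'a) w * word_eval n A B w $$ (i, j))
      = mat n n (\<lambda>(i, j). (if b then B else A) $$ (i, j))"
    using assms by (simp add: V W)
  show ?thesis unfolding ncpoly_eval_def S M
  proof (rule eq_matI)
    fix i j assume "i < dim_row (if b then B else A)" "j < dim_col (if b then B else A)"
    thus "mat n n (\<lambda>(i, j). (if b then B else A) $$ (i, j)) $$ (i, j) = (if b then B else A) $$ (i, j)"
      using C by auto
  qed (use C in auto)
qed

definition Pw :: "nat \<Rightarrow> nat \<Rightarrow> nat \<Rightarrow> nat \<Rightarrow> bool list \<Rightarrow> 'a::field" where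
  "Pw p i a b = (if i = 0 \<and> a = b then cst 1
     else if a = 1 \<and> b = 0 \<and> i = 1 then cst 1
     else if a = 1 \<and> b = 0 \<and> i = p then var False
     else if a = 1 \<and> b = 0 \<and> i = p^2 then var True else (\<lambda>_. 0))"

definition Dm :: "nat \<Rightarrow> nat \<Rightarrow> 'a::field mat" where
  "Dm n i = (if i = 0 then 1\<^sub>m n else 0\<^sub>m n n)"
definition Em :: "nat \<Rightarrow> nat \<Rightarrow> 'a::field mat \<Rightarrow> 'a mat \<Rightarrow> nat \<Rightarrow> 'a mat" where
  "Em p n A B i = (if i = 1 then 1\<^sub>m n else if i = p then A else if i = p^2 then B else 0\<^sub>m n n)"
definition GM :: "nat \<Rightarrow> nat \<Rightarrow> 'a::field mat \<Rightarrow> 'a mat \<Rightarrow> nat \<Rightarrow> 'a mat" where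
  "GM p n A B i = four_block_mat (Dm n i) (0\<^sub>m n n) (Em p n A B i) (Dm n i)"

lemma Dm_carrier[simp]: "Dm n i \<in> carrier_mat n n" by (simp add: Dm_def)
lemma Em_carrier[simp]: "A \<in> carrier_mat n n \<Longrightarrow> B \<in> carrier_mat n n \<Longrightarrow> Em p n A B i \<in> carrier_mat n n"
  by (simp add: Em_def)

lemma p2_facts: assumes "p \<ge> (2::nat)" shows "p^2 \<noteq> p" "p^2 \<noteq> 1" "p^2 \<noteq> 0" "p \<noteq> 1" "p \<noteq> 0"
proof -
  have "2 * p \<le> p * p" using assms by (intro mult_le_mono1)
  hence h: "2 * p \<le> p^2" by (simp add: power2_eq_square)
  show "p^2 \<noteq> p" "p^2 \<noteq> 1" "p^2 \<noteq> 0" using h assms by linarith+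
  show "p \<noteq> 1" "p \<noteq> 0" using assms by auto
qed

lemma eval_Pw:
  assumes p: "p \<ge> 2" and AB: "A \<in> carrier_mat n n" "B \<in> carrier_mat n n"
  shows "ncpoly_eval n (Pw p i a b) A B = (if a = b then Dm n i else if a = 1 \<and> b = 0 then Em p n A B i else 0\<^sub>m n n)"
proof -
  note f = p2_facts[OF p]
  consider "i = 0" | "i = 1" | "i = p" | "i = p^2" | "i \<noteq> 0" "i \<noteq> 1" "i \<noteq> p" "i \<noteq> p^2" by blast
  then show ?thesis
  proof cases
    case 1
    have eq: "Pw p i a b = (if a = b then cst 1 else (\<lambda>_. 0))" using f 1 by (auto simp add: Pw_def)
    show ?thesis unfolding eq using 1 f by (cases "a = b") (auto simp add: Dm_def Em_def eval_zero eval_one)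
  next
    case 2
    have eq: "Pw p i a b = (if a = b then (\<lambda>_. 0) else if a = 1 \<and> b = 0 then cst 1 else (\<lambda>_. 0))" using f 2 by (auto simp add: Pw_def)
    show ?thesis unfolding eq using 2 f by (cases "a = b"; cases "a = 1 \<and> b = 0") (auto simp add: Dm_def Em_def eval_zero eval_one)
  next
    case 3
    have eq: "Pw p i a b = (if a = b then (\<lambda>_. 0) else if a = 1 \<and> b = 0 then var False else (\<lambda>_. 0))" using f 3 by (auto simp add: Pw_def)
    show ?thesis unfolding eq using 3 f by (cases "a = b"; cases "a = 1 \<and> b = 0") (auto simp add: Dm_def Em_def eval_zero eval_var[OF AB])
  next
    case 4
    have eq: "Pw p i a b = (if a = b then (\<lambda>_. 0) else if a = 1 \<and> b = 0 then var True else (\<lambda>_. 0))" using f 4 by (auto simp add: Pw_def)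
    show ?thesis unfolding eq using 4 f by (cases "a = b"; cases "a = 1 \<and> b = 0") (auto simp add: Dm_def Em_def eval_zero eval_var[OF AB])
  next
    case 5
    have eq: "Pw p i a b = (\<lambda>_. 0)" using 5 by (simp add: Pw_def)
    show ?thesis unfolding eq using 5 f by (cases "a = b"; cases "a = 1 \<and> b = 0") (auto simp add: Dm_def Em_def eval_zero)
  qed
qed

lemma divmod2:
  fixes r n :: nat assumes "r < n + n"
  shows "r div n = (if r < n then 0 else 1) \<and> r mod n = (if r < n then r else r - n)"
proof (cases "r < n")
  case True thus ?thesis by simp
next
  case False
  define x where "x = r - n"
  have r: "r = n + x" and x: "x < n" using False assms by (auto simp: x_def)
  have "n \<noteq> 0" using x by simp
  thus ?thesis using r x False by simp
qed

lemma bimod_GM: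
  assumes p: "p \<ge> 2" and AB: "A \<in> carrier_mat n n" "B \<in> carrier_mat n n"
  shows "bimod_functor 2 (Pw p) n A B i = GM p n A B i"
proof (rule eq_matI)
  have dD: "dim_row (Dm n i) = n" "dim_col (Dm n i) = n" by (simp_all add: Dm_def)
  show "dim_row (bimod_functor 2 (Pw p) n A B i) = dim_row (GM p n A B i)"
    "dim_col (bimod_functor 2 (Pw p) n A B i) = dim_col (GM p n A B i)"
    by (auto simp: bimod_functor_def GM_def dD)
  fix r c assume r: "r < dim_row (GM p n A B i)" and c: "c < dim_col (GM p n A B i)"
  hence r2: "r < n + n" and c2: "c < n + n" by (auto simp: GM_def dD)
  have dr: "r div n = (if r < n then 0 else 1)" "r mod n = (if r < n then r else r - n)"
    using divmod2[OF r2] by auto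
  have dc: "c div n = (if c < n then 0 else 1)" "c mod n = (if c < n then c else c - n)"
    using divmod2[OF c2] by auto
  have E: "Em p n A B i \<in> carrier_mat n n" using AB by simp
  show "bimod_functor 2 (Pw p) n A B i $$ (r, c) = GM p n A B i $$ (r, c)"
  proof -
    have "bimod_functor 2 (Pw p) n A B i $$ (r, c) = ncpoly_eval n (Pw p i (r div n) (c div n)) A B $$ (r mod n, c mod n)"
      unfolding bimod_functor_def using r2 c2 by simp
    also have "\<dots> = GM p n A B i $$ (r, c)"
    proof (cases "r < n"; cases "c < n")
      assume "r < n" "c < n"
      thus ?thesis using E by (simp add: eval_Pw[OF p AB] dr dc GM_def dD)
    next
      assume "r < n" "\<not> c < n"
      thus ?thesis using E c2 by (simp add: eval_Pw[OF p AB] dr dc GM_def dD)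
    next
      assume "\<not> r < n" "c < n"
      thus ?thesis using E r2 by (simp add: eval_Pw[OF p AB] dr dc GM_def dD)
    next
      assume "\<not> r < n" "\<not> c < n"
      thus ?thesis using E r2 c2 by (simp add: eval_Pw[OF p AB] dr dc GM_def dD)
    qed
    finally show ?thesis .
  qed
qed



lemma four_block_eq_iff:
  assumes "A1 \<in> carrier_mat nr1 nc1" "A2 \<in> carrier_mat nr1 nc1"
    "B1 \<in> carrier_mat nr1 nc2" "B2 \<in> carrier_mat nr1 nc2"
    "C1 \<in> carrier_mat nr2 nc1" "C2 \<in> carrier_mat nr2 nc1"
    "D1 \<in> carrier_mat nr2 nc2" "D2 \<in> carrier_mat nr2 nc2"
  shows "four_block_mat A1 B1 C1 D1 = four_block_mat A2 B2 C2 D2 \<longleftrightarrow> A1 = A2 \<and> B1 = B2 \<and> C1 = C2 \<and> D1 = D2"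
proof
  assume eq: "four_block_mat A1 B1 C1 D1 = four_block_mat A2 B2 C2 D2"
  have e: "\<And>i j. i < nr1 + nr2 \<Longrightarrow> j < nc1 + nc2 \<Longrightarrow>
    four_block_mat A1 B1 C1 D1 $$ (i,j) = four_block_mat A2 B2 C2 D2 $$ (i,j)" using eq by simp
  have "A1 = A2"
  proof (rule eq_matI)
    fix i j assume "i < dim_row A2" "j < dim_col A2"
    thus "A1 $$ (i, j) = A2 $$ (i, j)" using e[of i j] assms by auto
  qed (use assms in auto)
  moreover have "B1 = B2"
  proof (rule eq_matI)
    fix i j assume "i < dim_row B2" "j < dim_col B2"
    thus "B1 $$ (i, j) = B2 $$ (i, j)" using e[of i "j + nc1"] assms by auto
  qed (use assms in auto)
  moreover have "C1 = C2"
  proof (rule eq_matI)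
    fix i j assume "i < dim_row C2" "j < dim_col C2"
    thus "C1 $$ (i, j) = C2 $$ (i, j)" using e[of "i + nr1" j] assms by auto
  qed (use assms in auto)
  moreover have "D1 = D2"
  proof (rule eq_matI)
    fix i j assume "i < dim_row D2" "j < dim_col D2"
    thus "D1 $$ (i, j) = D2 $$ (i, j)" using e[of "i + nr1" "j + nc1"] assms by auto
  qed (use assms in auto)
  ultimately show "A1 = A2 \<and> B1 = B2 \<and> C1 = C2 \<and> D1 = D2" by blast
qed auto

lemma GM_carrier[simp]: "A \<in> carrier_mat n n \<Longrightarrow> B \<in> carrier_mat n n \<Longrightarrow> GM p n A B i \<in> carrier_mat (n+n) (n+n)"
  unfolding GM_def by simp

lemma GM_0: "p \<ge> 2 \<Longrightarrow> GM p n A B 0 = 1\<^sub>m (n+n)"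
  using p2_facts[of p] unfolding GM_def Dm_def Em_def by simp

lemma GM_pos: "i \<noteq> 0 \<Longrightarrow> GM p n A B i = four_block_mat (0\<^sub>m n n) (0\<^sub>m n n) (Em p n A B i) (0\<^sub>m n n)"
  unfolding GM_def Dm_def by simp

lemma Em_1: "p \<ge> 2 \<Longrightarrow> Em p n A B 1 = 1\<^sub>m n"
  unfolding Em_def by simp
lemma Em_p: "p \<ge> 2 \<Longrightarrow> Em p n A B p = A"
  using p2_facts[of p] unfolding Em_def by simp
lemma Em_p2: "p \<ge> 2 \<Longrightarrow> Em p n A B (p^2) = B"
  using p2_facts[of p] unfolding Em_def by simp
lemma Em_other: "i \<noteq> 1 \<Longrightarrow> i \<noteq> p \<Longrightarrow> i \<noteq> p^2 \<Longrightarrow> Em p n A B i = 0\<^sub>m n n"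
  unfolding Em_def by simp

lemma GM_1: "p \<ge> 2 \<Longrightarrow> GM p n A B 1 = four_block_mat (0\<^sub>m n n) (0\<^sub>m n n) (1\<^sub>m n) (0\<^sub>m n n)"
  unfolding GM_def Dm_def Em_def by simp

lemma GM_p: "p \<ge> 2 \<Longrightarrow> GM p n A B p = four_block_mat (0\<^sub>m n n) (0\<^sub>m n n) A (0\<^sub>m n n)"
  using p2_facts[of p] unfolding GM_def Dm_def Em_def by simp
lemma GM_p2: "p \<ge> 2 \<Longrightarrow> GM p n A B (p^2) = four_block_mat (0\<^sub>m n n) (0\<^sub>m n n) B (0\<^sub>m n n)"
  using p2_facts[of p] unfolding GM_def Dm_def Em_def by simp

lemma mult_left_blk:
  assumes f: "f1 \<in> carrier_mat n' n" "f2 \<in> carrier_mat n' n" "f3 \<in> carrier_mat n' n" "f4 \<in> carrier_mat n' n"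
    and X: "X \<in> carrier_mat n n"
  shows "four_block_mat f1 f2 f3 f4 * four_block_mat (0\<^sub>m n n) (0\<^sub>m n n) X (0\<^sub>m n n)
     = four_block_mat (f2 * X) (0\<^sub>m n' n) (f4 * X) (0\<^sub>m n' n)"
  using f X by (subst mult_four_block_mat[OF f zero_carrier_mat zero_carrier_mat X zero_carrier_mat]) simp

lemma mult_right_blk:
  assumes f: "f1 \<in> carrier_mat n' n" "f2 \<in> carrier_mat n' n" "f3 \<in> carrier_mat n' n" "f4 \<in> carrier_mat n' n"
    and Y: "Y \<in> carrier_mat n' n'"
  shows "four_block_mat (0\<^sub>m n' n') (0\<^sub>m n' n') Y (0\<^sub>m n' n') * four_block_mat f1 f2 f3 f4
     = four_block_mat (0\<^sub>m n' n) (0\<^sub>m n' n) (Y * f1) (Y * f2)"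
  using f Y by (subst mult_four_block_mat[OF zero_carrier_mat zero_carrier_mat Y zero_carrier_mat f]) simp

lemma GM_hom:
  assumes p: "p \<ge> 2" and AB: "A \<in> carrier_mat n n" "B \<in> carrier_mat n n"
    and AB': "A' \<in> carrier_mat n' n'" "B' \<in> carrier_mat n' n'"
    and fc: "f \<in> carrier_mat (n'+n') (n+n)"
    and com: "\<And>i. f * GM p n A B i = GM p n' A' B' i * f"
  shows "\<exists>f1 f3. f1 \<in> carrier_mat n' n \<and> f3 \<in> carrier_mat n' n \<and> f = four_block_mat f1 (0\<^sub>m n' n) f3 f1
     \<and> f1 * A = A' * f1 \<and> f1 * B = B' * f1"
proof -
  obtain f1 f2 f3 f4 where sb: "split_block f n' n = (f1, f2, f3, f4)" by (metis prod_cases4)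
  note S = split_block[OF sb, of n' n]
  have c: "f1 \<in> carrier_mat n' n" "f2 \<in> carrier_mat n' n" "f3 \<in> carrier_mat n' n" "f4 \<in> carrier_mat n' n"
    and fe: "f = four_block_mat f1 f2 f3 f4" using S fc by auto
  have p0: "p \<noteq> 0" using p by simp
  have p20: "p^2 \<noteq> 0" using p by simp
  have gen: "f2 * X = 0\<^sub>m n' n \<and> f4 * X = Y * f1 \<and> 0\<^sub>m n' n = Y * f2"
    if X: "X \<in> carrier_mat n n" and Y: "Y \<in> carrier_mat n' n'"
      and eq: "f * four_block_mat (0\<^sub>m n n) (0\<^sub>m n n) X (0\<^sub>m n n) = four_block_mat (0\<^sub>m n' n') (0\<^sub>m n' n') Y (0\<^sub>m n' n') * f" for X Y
  proof -
    have "four_block_mat (f2 * X) (0\<^sub>m n' n) (f4 * X) (0\<^sub>m n' n) = four_block_mat (0\<^sub>m n' n) (0\<^sub>m n' n) (Y * f1) (Y * f2)"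
      using eq unfolding fe mult_left_blk[OF c X] mult_right_blk[OF c Y] .
    moreover have "f2 * X \<in> carrier_mat n' n" "f4 * X \<in> carrier_mat n' n" "Y * f1 \<in> carrier_mat n' n" "Y * f2 \<in> carrier_mat n' n"
      using c X Y by auto
    ultimately show ?thesis by (subst (asm) four_block_eq_iff) auto
  qed
  have h1: "f2 * 1\<^sub>m n = 0\<^sub>m n' n \<and> f4 * 1\<^sub>m n = 1\<^sub>m n' * f1 \<and> 0\<^sub>m n' n = 1\<^sub>m n' * f2"
  proof -
    have "f * four_block_mat (0\<^sub>m n n) (0\<^sub>m n n) (1\<^sub>m n) (0\<^sub>m n n) = four_block_mat (0\<^sub>m n' n') (0\<^sub>m n' n') (1\<^sub>m n') (0\<^sub>m n' n') * f"
      using com[of 1] unfolding GM_1[OF p] .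
    thus ?thesis by (rule gen[OF one_carrier_mat one_carrier_mat])
  qed
  have f2: "f2 = 0\<^sub>m n' n" using h1 left_mult_one_mat[OF c(2)] by simp
  have f4: "f4 = f1" using h1 right_mult_one_mat[OF c(4)] left_mult_one_mat[OF c(1)] by simp
  have hA: "f4 * A = A' * f1"
  proof -
    have "f * four_block_mat (0\<^sub>m n n) (0\<^sub>m n n) A (0\<^sub>m n n) = four_block_mat (0\<^sub>m n' n') (0\<^sub>m n' n') A' (0\<^sub>m n' n') * f"
      using com[of p] unfolding GM_p[OF p] .
    from gen[OF AB(1) AB'(1) this] show ?thesis by blast
  qed
  have hB: "f4 * B = B' * f1"
  proof -
    have "f * four_block_mat (0\<^sub>m n n) (0\<^sub>m n n) B (0\<^sub>m n n) = four_block_mat (0\<^sub>m n' n') (0\<^sub>m n' n') B' (0\<^sub>m n' n') * f"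
      using com[of "p^2"] unfolding GM_p2[OF p] .
    from gen[OF AB(2) AB'(2) this] show ?thesis by blast
  qed
  show ?thesis using c fe f2 f4 hA hB by blast
qed



lemma pair_hom:
  assumes "e \<in> carrier_mat n' n" "e * A = A' * e" "e * B = B' * e"
  shows "family_hom n (pair_family A B) n' (pair_family A' B') e"
  using assms unfolding family_hom_def pair_family_def by auto

lemma blk_sq:
  assumes c: "e1 \<in> carrier_mat n n" "e3 \<in> carrier_mat n n"
  shows "four_block_mat e1 (0\<^sub>m n n) e3 e1 * four_block_mat e1 (0\<^sub>m n n) e3 e1
    = four_block_mat (e1 * e1) (0\<^sub>m n n) (e3 * e1 + e1 * e3) (e1 * e1)"
  using c by (subst mult_four_block_mat[OF c(1) zero_carrier_mat c(2) c(1) c(1) zero_carrier_mat c(2) c(1)]) simp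

lemma blk_prod:
  assumes c: "g1 \<in> carrier_mat n n'" "g3 \<in> carrier_mat n n'" "f1 \<in> carrier_mat n' n" "f3 \<in> carrier_mat n' n"
  shows "four_block_mat g1 (0\<^sub>m n n') g3 g1 * four_block_mat f1 (0\<^sub>m n' n) f3 f1
    = four_block_mat (g1 * f1) (0\<^sub>m n n) (g3 * f1 + g1 * f3) (g1 * f1)"
  using c by (subst mult_four_block_mat[OF c(1) zero_carrier_mat c(2) c(1) c(3) zero_carrier_mat c(4) c(3)]) simp

lemma GM_indec:
  assumes p: "p \<ge> 2" and AB: "A \<in> carrier_mat n n" "B \<in> carrier_mat n n"
    and ind: "family_indec n (pair_family A B)"
  shows "family_indec (2 * n) (GM p n A B)"
proof -
  have n: "n > 0" using ind unfolding family_indec_def by simp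
  show ?thesis unfolding family_indec_def mult_2
  proof (intro conjI allI impI)
    show "0 < n + n" using n by simp
    fix e assume "family_hom (n + n) (GM p n A B) (n + n) (GM p n A B) e \<and> e * e = e"
    hence eh: "family_hom (n + n) (GM p n A B) (n + n) (GM p n A B) e" and ee: "e * e = e" by auto
    from GM_hom[OF p AB AB] eh obtain e1 e3 where
      c: "e1 \<in> carrier_mat n n" "e3 \<in> carrier_mat n n" and ef: "e = four_block_mat e1 (0\<^sub>m n n) e3 e1"
      and hA: "e1 * A = A * e1" and hB: "e1 * B = B * e1"
      unfolding family_hom_def by blast
    have "four_block_mat (e1 * e1) (0\<^sub>m n n) (e3 * e1 + e1 * e3) (e1 * e1) = four_block_mat e1 (0\<^sub>m n n) e3 e1"
      using ee unfolding ef blk_sq[OF c] .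
    hence sq: "e1 * e1 = e1" and s3: "e3 * e1 + e1 * e3 = e3"
      using c by (subst (asm) four_block_eq_iff; auto)+
    have "family_hom n (pair_family A B) n (pair_family A B) e1" by (rule pair_hom[OF c(1) hA hB])
    with ind sq have "e1 = 0\<^sub>m n n \<or> e1 = 1\<^sub>m n" unfolding family_indec_def by blast
    thus "e = 0\<^sub>m (n + n) (n + n) \<or> e = 1\<^sub>m (n + n)"
    proof
      assume e1: "e1 = 0\<^sub>m n n"
      have "e3 = 0\<^sub>m n n" using s3 c unfolding e1 by simp
      thus ?thesis using ef e1 by simp
    next
      assume e1: "e1 = 1\<^sub>m n"
      have "e3 + e3 = e3" using s3 c unfolding e1 by simp
      have "e3 = 0\<^sub>m n n"
      proof (rule eq_matI)
        fix i j assume ij: "i < dim_row (0\<^sub>m n n :: 'a mat)" "j < dim_col (0\<^sub>m n n :: 'a mat)"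
        have "(e3 + e3) $$ (i, j) = e3 $$ (i, j)" using \<open>e3 + e3 = e3\<close> by simp
        hence "e3 $$ (i, j) + e3 $$ (i, j) = e3 $$ (i, j)" using ij c by simp
        hence "e3 $$ (i, j) = 0" by (metis add_0_left add_right_cancel)
        thus "e3 $$ (i, j) = 0\<^sub>m n n $$ (i, j)" using ij by simp
      qed (use c in auto)
      thus ?thesis using ef e1 by simp
    qed
  qed
qed

lemma GM_iso:
  assumes p: "p \<ge> 2" and AB: "A \<in> carrier_mat n n" "B \<in> carrier_mat n n"
    and AB': "A' \<in> carrier_mat n' n'" "B' \<in> carrier_mat n' n'"
    and iso: "family_iso (2 * n) (GM p n A B) (2 * n') (GM p n' A' B')"
  shows "family_iso n (pair_family A B) n' (pair_family A' B')"
proof -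
  from iso obtain f g where fh: "family_hom (n + n) (GM p n A B) (n' + n') (GM p n' A' B') f"
    and gh: "family_hom (n' + n') (GM p n' A' B') (n + n) (GM p n A B) g"
    and gf: "g * f = 1\<^sub>m (n + n)" and fg: "f * g = 1\<^sub>m (n' + n')"
    unfolding family_iso_def mult_2 by blast
  from GM_hom[OF p AB AB'] fh obtain f1 f3 where
    cf: "f1 \<in> carrier_mat n' n" "f3 \<in> carrier_mat n' n" and ff: "f = four_block_mat f1 (0\<^sub>m n' n) f3 f1"
    and fA: "f1 * A = A' * f1" and fB: "f1 * B = B' * f1"
    unfolding family_hom_def by blast
  from GM_hom[OF p AB' AB] gh obtain g1 g3 where
    cg: "g1 \<in> carrier_mat n n'" "g3 \<in> carrier_mat n n'" and gg: "g = four_block_mat g1 (0\<^sub>m n n') g3 g1"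
    and gA: "g1 * A' = A * g1" and gB: "g1 * B' = B * g1"
    unfolding family_hom_def by blast
  have "four_block_mat (g1 * f1) (0\<^sub>m n n) (g3 * f1 + g1 * f3) (g1 * f1)
      = four_block_mat (1\<^sub>m n) (0\<^sub>m n n) (0\<^sub>m n n) (1\<^sub>m n)"
    using gf unfolding gg ff blk_prod[OF cg cf] by simp
  hence gf1: "g1 * f1 = 1\<^sub>m n" using cg cf by (subst (asm) four_block_eq_iff) auto
  have "four_block_mat (f1 * g1) (0\<^sub>m n' n') (f3 * g1 + f1 * g3) (f1 * g1)
      = four_block_mat (1\<^sub>m n') (0\<^sub>m n' n') (0\<^sub>m n' n') (1\<^sub>m n')"
    using fg unfolding gg ff blk_prod[OF cf cg] by simp
  hence fg1: "f1 * g1 = 1\<^sub>m n'" using cg cf by (subst (asm) four_block_eq_iff) auto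
  show ?thesis unfolding family_iso_def
    using pair_hom[OF cf(1) fA fB] pair_hom[OF cg(1) gA gB] gf1 fg1 by blast
qed



lemma smult1: "(1::'a::field) \<cdot>\<^sub>m A = A" by (rule eq_matI) auto
lemma smult0: "A \<in> carrier_mat nr nc \<Longrightarrow> (0::'a::field) \<cdot>\<^sub>m A = 0\<^sub>m nr nc" by (rule eq_matI) auto

lemma GM_prod_pos:
  assumes j: "j \<noteq> 0" and l: "l \<noteq> 0" and AB: "A \<in> carrier_mat n n" "B \<in> carrier_mat n n"
  shows "GM p n A B j * GM p n A B l = 0\<^sub>m (n+n) (n+n)"
proof -
  have E: "Em p n A B j \<in> carrier_mat n n" "Em p n A B l \<in> carrier_mat n n" using AB by auto
  show ?thesis unfolding GM_pos[OF j] GM_pos[OF l]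
    mult_left_blk[OF zero_carrier_mat zero_carrier_mat E(1) zero_carrier_mat E(2)]
    using E by simp
qed

lemma GM_zero_coef:
  fixes A B :: "'a::field mat"
  assumes pc: "p = CHAR('a)" and pr: "prime p" and j: "j \<noteq> 0" and l: "l \<noteq> 0"
    and AB: "A \<in> carrier_mat n n" "B \<in> carrier_mat n n"
  shows "of_nat ((j + l) choose j) \<cdot>\<^sub>m GM p n A B (j + l) = 0\<^sub>m (n+n) (n+n)"
proof -
  have p2: "p \<ge> 2" using pr prime_ge_2_nat by blast
  have z: "of_nat ((j + l) choose j) = (0::'a)" if k: "j + l = p ^ k" for k
  proof -
    have "p dvd (p ^ k choose j)" using prime_pow_dvd_choose[OF pr, of j k] j l k by simp
    thus ?thesis unfolding k pc using of_nat_eq_0_iff_char_dvd by blast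
  qed
  show ?thesis
  proof (cases "j + l = p \<or> j + l = p^2")
    case True
    hence "of_nat ((j + l) choose j) = (0::'a)" using z[of 1] z[of 2] by auto
    thus ?thesis using smult0[OF GM_carrier[OF AB]] by simp
  next
    case False
    have ne: "j + l \<noteq> 0" "j + l \<noteq> 1" using j l by auto
    have "GM p n A B (j + l) = 0\<^sub>m (n+n) (n+n)"
    proof -
      have "Em p n A B (j + l) = 0\<^sub>m n n" using False ne by (intro Em_other) auto
      thus ?thesis unfolding GM_pos[OF ne(1)] by simp
    qed
    thus ?thesis by simp
  qed
qed

lemma GM_rational:
  fixes A B :: "'a::field mat"
  assumes pc: "p = CHAR('a)" and pr: "prime p" and AB: "A \<in> carrier_mat n n" "B \<in> carrier_mat n n"
  shows "rational_Ga_module (2 * n) (GM p n A B)"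
proof -
  have p2: "p \<ge> 2" using pr prime_ge_2_nat by blast
  have pp: "p \<le> p^2" by (metis le_square power2_eq_square)
  note f = p2_facts[OF p2]
  have big: "GM p n A B i = 0\<^sub>m (n+n) (n+n)" if i: "i > p^2" for i
  proof -
    have ne: "i \<noteq> 0" "i \<noteq> 1" "i \<noteq> p" "i \<noteq> p^2" using i pp f by auto
    show ?thesis unfolding GM_pos[OF ne(1)] Em_other[OF ne(2-4)] by simp
  qed
  have rel: "GM p n A B j * GM p n A B l = of_nat ((j + l) choose j) \<cdot>\<^sub>m GM p n A B (j + l)" for j l
  proof (cases "j = 0")
    case True
    thus ?thesis using GM_carrier[OF AB, of p l] by (simp add: GM_0[OF p2] smult1)
  next
    case j: False
    show ?thesis
    proof (cases "l = 0")
      case True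
      thus ?thesis using GM_carrier[OF AB, of p j] by (simp add: GM_0[OF p2] smult1)
    next
      case l: False
      show ?thesis unfolding GM_prod_pos[OF j l AB] GM_zero_coef[OF pc pr j l AB] ..
    qed
  qed
  show ?thesis unfolding rational_Ga_module_def family_dim_def mult_2
    using GM_carrier[OF AB] big GM_0[OF p2] rel by blast
qed



theorem corollary3p3:
  assumes "alg_closed TYPE('a::field)"
    and "CHAR('a) > 0"
  shows "Ga_modules_wild TYPE('a)"
proof -
  define p where "p = CHAR('a)"
  have pr: "prime p" using prime_CHAR_semidom[OF assms(2)] p_def by simp
  have p2: "p \<ge> 2" using pr prime_ge_2_nat by blast
  have pp: "p \<le> p^2" by (metis le_square power2_eq_square)
  note f = p2_facts[OF p2]
  have BG: "bimod_functor 2 (Pw p) n A B = GM p n A B"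
    if "A \<in> carrier_mat n n" "B \<in> carrier_mat n n" for n and A B :: "'a mat"
    using bimod_GM[OF p2 that] by blast
  have c1: "(\<forall>i a b. ncpoly (Pw p i a b :: bool list \<Rightarrow> 'a))"
  proof (intro allI)
    fix i a b
    have "{w. (Pw p i a b :: bool list \<Rightarrow> 'a) w \<noteq> 0} \<subseteq> {[], [False], [True]}"
      by (auto simp: Pw_def cst_def var_def split: if_splits)
    thus "ncpoly (Pw p i a b :: bool list \<Rightarrow> 'a)" unfolding ncpoly_def by (rule finite_subset) simp
  qed
  have c2: "\<exists>d. \<forall>i>d. \<forall>a b. (Pw p i a b :: bool list \<Rightarrow> 'a) = (\<lambda>_. 0)"
  proof (intro exI allI impI)
    fix i a b assume i: "i > p^2"
    have ne: "i \<noteq> 0" "i \<noteq> 1" "i \<noteq> p" "i \<noteq> p^2" using i pp f by auto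
    thus "(Pw p i a b :: bool list \<Rightarrow> 'a) = (\<lambda>_. 0)" unfolding Pw_def by simp
  qed
  have c3: "\<forall>n A B. A \<in> carrier_mat n n \<and> B \<in> carrier_mat n n \<longrightarrow>
          rational_Ga_module (2 * n) (bimod_functor 2 (Pw p) n A B :: nat \<Rightarrow> 'a mat)"
    by (auto simp: BG intro: GM_rational[OF p_def pr])
  have c4: "\<forall>n A B. A \<in> carrier_mat n n \<and> B \<in> carrier_mat n n \<longrightarrow>
          family_indec n (pair_family A B) \<longrightarrow>
          family_indec (2 * n) (bimod_functor 2 (Pw p) n A B :: nat \<Rightarrow> 'a mat)"
    by (auto simp: BG intro: GM_indec[OF p2])
  have c5: "\<forall>n A B n' A' B'. A \<in> carrier_mat n n \<and> B \<in> carrier_mat n n \<and>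
          A' \<in> carrier_mat n' n' \<and> B' \<in> carrier_mat n' n' \<longrightarrow>
          family_iso (2 * n) (bimod_functor 2 (Pw p) n A B :: nat \<Rightarrow> 'a mat) (2 * n') (bimod_functor 2 (Pw p) n' A' B') \<longrightarrow>
          family_iso n (pair_family A B) n' (pair_family A' B')"
    by (auto simp: BG intro: GM_iso[OF p2])
  show ?thesis unfolding Ga_modules_wild_def
    by (rule exI[of _ 2], rule exI[of _ "Pw p"]) (use c1 c2 c3 c4 c5 in simp)
qed


end
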